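(* Let $k\in\mathbb{N}$ with $\gcd(k,6)=3$, let $h$ be an integer with $\gcd(h,k)=1$, and let $h'$ be an integer with $hh'\equiv-1\pmod{k}$ and $2\mid h'$. Then $$\frac{\omega_{2h,\frac{k}{3}}\,\omega_{2h,k}\,\omega_{h,k}}{\omega_{h,\frac{k}{3}}} =-\exp\!\left(- \frac{2\pi i}{36k} \left(-9k+9k^2+ h (-9+5k^2) - 2k^2h' \right)\right)$$ and $$\frac{\omega_{h,\frac{k}{3}}\,\omega_{2h,k}\,\omega_{h,k}}{\omega_{2h,\frac{k}{3}}^3} =-\exp\!\left(- \frac{2\pi i}{18k} \left(3k^2+ h (9+k^2) - k^2h' \right)\right).$$
   Context: For coprime integers $h$ and $K\ge1$, $\omega_{h,K}=\exp(\pi i\, s(h,K))$, where $s(h,K)=\sum_{r=1}^{K-1}\frac{r}{K}\left(\frac{hr}{K}-\lfloor \frac{hr}{K}\rfloor-\frac12\right)$ is the Dedekind sum (the multiplier of the Dedekind eta function). *)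

theory Defs
  imports "HOL-Analysis.Analysis" "HOL-Number_Theory.Cong"
begin

definition dedekind_sum :: "int \<Rightarrow> nat \<Rightarrow> real" where
  "dedekind_sum h K = (\<Sum>r\<in>{1..<K}. (real r / real K) *
      (real_of_int h * real r / real K - of_int \<lfloor>real_of_int h * real r / real K\<rfloor> - 1/2))"

definition omega :: "int \<Rightarrow> nat \<Rightarrow> complex" where
  "omega h K = exp (complex_of_real pi * \<i> * complex_of_real (dedekind_sum h K))"

end

theory Submission
  imports Defs "HOL-Number_Theory.Modular_Inverse"
begin


definition TT :: "int \<Rightarrow> int \<Rightarrow> int" where
  "TT a K = (\<Sum>x\<in>{1..<K}. x * (a * x div K))"

lemma sum_id_int: "K \<ge> 0 \<Longrightarrow> 2 * (\<Sum>x\<in>{1..<K}. x) = K * (K - 1)" for K :: int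
proof (induction K rule: int_ge_induct[where k=0])
  case base then show ?case by simp
next
  case (step i)
  show ?case
  proof (cases "i = 0")
    case False
    have "{1..<i+1} = insert i {1..<i}" using step False by auto
    then show ?thesis using step by (auto simp: algebra_simps)
  qed simp
qed

lemma sum_sq_int: "K \<ge> 0 \<Longrightarrow> 6 * (\<Sum>x\<in>{1..<K}. x^2) = (K - 1) * K * (2*K - 1)" for K :: int
proof (induction K rule: int_ge_induct[where k=0])
  case base then show ?case by simp
next
  case (step i)
  show ?case
  proof (cases "i = 0")
    case False
    have "{1..<i+1} = insert i {1..<i}" using step False by auto
    then show ?thesis using step by (auto simp: algebra_simps power2_eq_square)
  qed simp
qed

lemma dedekind_int:
  "dedekind_sum a K = (\<Sum>x\<in>{1..<int K}. (of_int x / real K) *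
      (of_int (a * x) / real K - of_int ((a * x) div int K) - 1/2))"
proof -
  have "dedekind_sum a K = (\<Sum>x\<in>int ` {1..<K}. (of_int x / real K) *
      (of_int (a * x) / real K - of_int ((a * x) div int K) - 1/2))"
    unfolding dedekind_sum_def
    apply (subst sum.reindex, simp)
    apply (rule sum.cong, simp)
    using floor_divide_of_int_eq[of "a * int _" "int K", where 'a=real]
    by (simp add: algebra_simps)
  then show ?thesis by (simp add: image_int_atLeastLessThan)
qed

lemma dedekind_TT:
  assumes "K > 0"
  shows "12 * real K * dedekind_sum a K =
    of_int (2 * a * (int K - 1) * (2 * int K - 1) - 12 * TT a (int K) - 3 * int K * (int K - 1))"
proof -
  define S1 where "S1 = (\<Sum>x\<in>{1..<int K}. x)"
  define S2 where "S2 = (\<Sum>x\<in>{1..<int K}. x^2)"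
  have e1: "2 * S1 = int K * (int K - 1)" unfolding S1_def by (rule sum_id_int) simp
  have e2: "6 * S2 = (int K - 1) * int K * (2 * int K - 1)" unfolding S2_def by (rule sum_sq_int) simp
  have "real K * (12 * real K * dedekind_sum a K) =
     (\<Sum>x\<in>{1..<int K}. 12 * a * of_int (x^2) - 12 * real K * of_int (x * (a * x div int K)) - 6 * real K * of_int x)"
    unfolding dedekind_int sum_distrib_left
    apply (rule sum.cong, simp)
    using assms by (simp add: field_simps power2_eq_square)
  also have "\<dots> = 12 * a * of_int S2 - 12 * real K * of_int (TT a (int K)) - 6 * real K * of_int S1"
    unfolding S1_def S2_def TT_def
    by (simp add: sum_subtractf sum_distrib_left)
  finally have "real K * (12 * real K * dedekind_sum a K) =
      12 * a * of_int S2 - 12 * real K * of_int (TT a (int K)) - 6 * real K * of_int S1" .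
  moreover have "real_of_int S2 = (real K - 1) * real K * (2 * real K - 1) / 6"
    using arg_cong[OF e2, of real_of_int] by simp
  moreover have "real_of_int S1 = real K * (real K - 1) / 2"
    using arg_cong[OF e1, of real_of_int] by simp
  ultimately have "real K * (12 * real K * dedekind_sum a K) = real K *
    of_int (2 * a * (int K - 1) * (2 * int K - 1) - 12 * TT a (int K) - 3 * int K * (int K - 1))"
    by (simp add: field_simps)
  then show ?thesis using assms by simp
qed



lemma int_le_div_iff: "(K::int) > 0 \<Longrightarrow> (s \<le> y div K) = (s * K \<le> y)"
  by (smt (verit) minus_div_mult_eq_mod nonzero_mult_div_cancel_right
    pos_mod_sign zdiv_mono1)

lemma sum_odd_int: "n \<ge> 0 \<Longrightarrow> (\<Sum>s\<in>{1..n}. 2 * s - 1) = n^2" for n :: int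
proof (induction n rule: int_ge_induct[where k=0])
  case base then show ?case by simp
next
  case (step i)
  have "{1..i+1} = insert (i+1) {1..i}" using step by auto
  then show ?case using step by (auto simp: algebra_simps power2_eq_square)
qed

lemma perm_sum:
  fixes a K :: int
  assumes "coprime a K"
  shows "(\<Sum>x\<in>{1..<K}. g (a * x mod K)) = (\<Sum>x\<in>{1..<K}. g x)"
  using sum.reindex_bij_betw[OF bij_betw_int_remainders_mult[OF assms], of g] .

lemma sq_as_sum:
  fixes n N :: int
  assumes "0 \<le> n" "n < N"
  shows "n^2 = (\<Sum>s\<in>{1..<N}. if s \<le> n then 2 * s - 1 else 0)"
proof -
  have "(\<Sum>s\<in>{1..<N}. if s \<le> n then 2 * s - 1 else 0) = (\<Sum>s\<in>{s\<in>{1..<N}. s \<le> n}. 2 * s - 1)"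
    using sum.inter_filter[of "{1..<N}" "\<lambda>s. 2 * s - 1" "\<lambda>s. s \<le> n"] by simp
  also have "{s\<in>{1..<N}. s \<le> n} = {1..n}" using assms by auto
  finally show ?thesis using sum_odd_int[OF assms(1)] by simp
qed

lemma reciprocity_TT:
  fixes a K :: int
  assumes a: "a > 0" and K: "K > 0" and cop: "coprime a K"
  shows "12 * a * TT a K + 12 * K * TT K a =
    6*K*(K-1)*(a-1)^2 + 3*K*(K-1)*(a-1) + (a^2-1)*(K-1)*(2*K-1)"
proof -
  define f where "f x = a * x div K" for x
  define g where "g s = K * s div a" for s
  define S2 where "S2 = (\<Sum>x\<in>{1..<K}. x^2)"
  define F2 where "F2 = (\<Sum>x\<in>{1..<K}. (f x)^2)"
  define G1 where "G1 = (\<Sum>s\<in>{1..<a}. g s)"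
  define S1a where "S1a = (\<Sum>s\<in>{1..<a}. s)"
  have e2: "6 * S2 = (K - 1) * K * (2 * K - 1)" unfolding S2_def by (rule sum_sq_int) (use K in simp)
  have e1a: "2 * S1a = a * (a - 1)" unfolding S1a_def by (rule sum_id_int) (use a in simp)
  have e1a': "2 * (\<Sum>s\<in>{1..<a}. s) = a * (a - 1)" using e1a S1a_def by simp
  have "(\<Sum>x\<in>{1..<K}. (a * x mod K)^2) = S2" unfolding S2_def
    by (rule perm_sum[OF cop])
  moreover have "a * x mod K = a * x - K * f x" for x unfolding f_def
    by (simp add: minus_div_mult_eq_mod[symmetric] algebra_simps)
  ultimately have "(\<Sum>x\<in>{1..<K}. (a * x - K * f x)^2) = S2" by simp
  moreover have "(\<Sum>x\<in>{1..<K}. (a * x - K * f x)^2) = a^2 * S2 - 2 * a * K * TT a K + K^2 * F2"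
    unfolding S2_def F2_def TT_def f_def
    by (simp add: power2_eq_square algebra_simps sum.distrib sum_subtractf sum_distrib_left)
  ultimately have i: "a^2 * S2 - 2 * a * K * TT a K + K^2 * F2 = S2" by simp
  have fb: "0 \<le> f x \<and> f x < a" if "x \<in> {1..<K}" for x
  proof -
    have "0 \<le> f x" using that a K unfolding f_def by (simp add: pos_imp_zdiv_nonneg_iff)
    moreover have "f x < a"
    proof -
      have "a * x < a * K" using that a by simp
      then have "a * x div K < a"
        using K by (metis int_le_div_iff linorder_not_le mult.commute)
      then show ?thesis unfolding f_def .
    qed
    ultimately show ?thesis by simp
  qed
  have gb: "0 \<le> g s \<and> g s < K" if "s \<in> {1..<a}" for s
  proof -
    have "0 \<le> g s" using that a K unfolding g_def by (simp add: pos_imp_zdiv_nonneg_iff)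
    moreover have "g s < K"
    proof -
      have "K * s < K * a" using that K by simp
      then have "K * s div a < K"
        using a by (metis int_le_div_iff linorder_not_le mult.commute)
      then show ?thesis unfolding g_def .
    qed
    ultimately show ?thesis by simp
  qed
  have key: "(s \<le> f x) = (g s < x)" if x: "x \<in> {1..<K}" and s: "s \<in> {1..<a}" for x s
  proof -
    have ne: "a * x \<noteq> K * s"
    proof
      assume "a * x = K * s"
      then have "K dvd a * x" by simp
      then have "K dvd x" using cop by (metis coprime_commute coprime_dvd_mult_right_iff)
      then show False using x zdvd_imp_le[of K x] by auto
    qed
    have "(s \<le> f x) = (s * K \<le> a * x)" unfolding f_def using int_le_div_iff[OF K] .
    moreover have "(x \<le> g s) = (x * a \<le> K * s)" unfolding g_def using int_le_div_iff[OF a] .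
    ultimately show ?thesis using ne by (auto simp: algebra_simps)
  qed
  have "F2 = (\<Sum>x\<in>{1..<K}. \<Sum>s\<in>{1..<a}. if s \<le> f x then 2 * s - 1 else 0)"
    unfolding F2_def
    by (rule sum.cong) (use fb sq_as_sum in auto)
  also have "\<dots> = (\<Sum>s\<in>{1..<a}. \<Sum>x\<in>{1..<K}. if s \<le> f x then 2 * s - 1 else 0)"
    by (rule sum.swap)
  also have "\<dots> = (\<Sum>s\<in>{1..<a}. (2 * s - 1) * (K - 1 - g s))"
  proof (rule sum.cong)
    fix s assume s: "s \<in> {1..<a}"
    have "(\<Sum>x\<in>{1..<K}. if s \<le> f x then 2 * s - 1 else 0) =
          (\<Sum>x\<in>{1..<K}. if g s < x then 2 * s - 1 else 0)"
      by (rule sum.cong) (use key s in auto)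
    also have "\<dots> = (\<Sum>x\<in>{x\<in>{1..<K}. g s < x}. 2 * s - 1)"
      using sum.inter_filter[of "{1..<K}" "\<lambda>x. 2 * s - 1" "\<lambda>x. g s < x"] by simp
    also have "{x\<in>{1..<K}. g s < x} = {g s + 1..<K}" using gb[OF s] by auto
    finally show "(\<Sum>x\<in>{1..<K}. if s \<le> f x then 2 * s - 1 else 0) = (2 * s - 1) * (K - 1 - g s)"
      using gb[OF s] by simp
  qed simp
  also have "\<dots> = (K - 1) * (\<Sum>s\<in>{1..<a}. 2 * s - 1) - 2 * TT K a + G1"
    unfolding TT_def G1_def g_def
    by (simp add: algebra_simps sum.distrib sum_subtractf sum_distrib_left)
  finally have F2eq: "F2 = (K - 1) * (\<Sum>s\<in>{1..<a}. 2 * s - 1) - 2 * TT K a + G1" .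
  have "(\<Sum>s\<in>{1..<a}. 2 * s - 1) = 2 * (\<Sum>s\<in>{1..<a}. s) - (a - 1)"
    using a by (simp add: sum_subtractf sum_distrib_left)
  then have od: "(\<Sum>s\<in>{1..<a}. 2 * s - 1) = (a - 1)^2"
    using e1a' by (simp add: power2_eq_square algebra_simps)
  have "(\<Sum>s\<in>{1..<a}. K * s mod a) = S1a" unfolding S1a_def
    using perm_sum[of K a "\<lambda>x. x"] cop by (simp add: coprime_commute)
  moreover have "K * s mod a = K * s - a * g s" for s unfolding g_def
    by (simp add: minus_div_mult_eq_mod[symmetric] algebra_simps)
  ultimately have "(\<Sum>s\<in>{1..<a}. K * s - a * g s) = S1a" by simp
  then have "K * S1a - a * G1 = S1a" unfolding S1a_def G1_def
    by (simp add: sum_subtractf sum_distrib_left)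
  then have h1: "a * G1 = (K - 1) * S1a" by (simp add: algebra_simps)
  have "a * (2 * G1) = (K - 1) * (2 * S1a)" using h1 by (simp add: algebra_simps)
  also have "\<dots> = a * ((K - 1) * (a - 1))" unfolding e1a by (simp add: algebra_simps)
  finally have "a * (2 * G1) = a * ((K - 1) * (a - 1))" .
  then have iii: "2 * G1 = (K - 1) * (a - 1)" using a by simp
  define Od where "Od = (\<Sum>s\<in>{1..<a}. 2 * s - 1)"
  have "2 * K * (12 * a * TT a K + 12 * K * TT K a) -
      2 * K * (6*K*(K-1)*(a-1)^2 + 3*K*(K-1)*(a-1) + (a^2-1)*(K-1)*(2*K-1)) =
      -12*(a^2*S2 - 2*a*K*TT a K + K^2*F2 - S2) + 12*K^2*(F2 - ((K-1)*Od - 2*TT K a + G1))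
      + 12*K^2*(K-1)*(Od - (a-1)^2) + 6*K^2*(2*G1 - (K-1)*(a-1))
      + 2*(a^2-1)*(6*S2 - (K-1)*K*(2*K-1))"
    by (simp add: algebra_simps power2_eq_square)
  also have "\<dots> = 0" using i F2eq od iii e2 unfolding Od_def by simp
  finally have "2 * K * (12 * a * TT a K + 12 * K * TT K a) =
      2 * K * (6*K*(K-1)*(a-1)^2 + 3*K*(K-1)*(a-1) + (a^2-1)*(K-1)*(2*K-1))" by simp
  then show ?thesis using K by simp
qed



lemma herm3: "\<not> 3 dvd (a::int) \<Longrightarrow> d div 3 + (d + a) div 3 + (d + 2*a) div 3 = d + a - 1"
proof -
  assume na: "\<not> 3 dvd a"
  define b c e f where "b = a div 3" "c = a mod 3" "e = d div 3" "f = d mod 3"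
  have a: "a = 3*b + c" and d: "d = 3*e + f" unfolding b_c_e_f_def by simp_all
  have c: "c = 1 \<or> c = 2" using na unfolding b_c_e_f_def by (auto simp: dvd_eq_mod_eq_0)
  have f: "f = 0 \<or> f = 1 \<or> f = 2" unfolding b_c_e_f_def by auto
  have 1: "d div 3 = e + f div 3" unfolding d by simp
  have 2: "(d + a) div 3 = e + b + (f + c) div 3" unfolding d a
    by (metis (no_types) add.assoc add.commute add.left_commute div_mult_self2 distrib_left zero_neq_numeral)
  have 3: "(d + 2*a) div 3 = e + 2*b + (f + 2*c) div 3" unfolding d a
    by (simp add: algebra_simps)
  show ?thesis unfolding 1 2 3 using c f a d by auto
qed

lemma div_one_int: "(N::int) \<le> t \<Longrightarrow> t < 2*N \<Longrightarrow> t div N = 1"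
proof -
  assume a: "N \<le> t" "t < 2*N"
  then have "t = (t - N) + 1 * N" "0 \<le> t - N" "t - N < N" by auto
  then show ?thesis by (metis a(1) add.commute add_cancel_right_left div_mult_self1 div_pos_pos_trivial
      linorder_not_le mult_1 not_one_le_zero order_le_less_trans)
qed

lemma dbl_parity:
  fixes N y :: int
  assumes N: "N > 0"
  shows "even (y div N + (2*y) div N - (2*y + N) div (2*N))"
proof -
  define d r where "d = y div N" "r = y mod N"
  have y: "y = N * d + r" unfolding d_r_def by simp
  have r: "0 \<le> r" "r < N" unfolding d_r_def using N by auto
  have A: "(2*y) div N = 2*d + (2*r) div N"
  proof -
    have "2*y = 2*r + (2*d) * N" unfolding y by (simp add: algebra_simps)
    then show ?thesis using N by simp
  qed
  have B: "(2*y + N) div (2*N) = d + (2*r + N) div (2*N)"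
  proof -
    have "2*y + N = (2*r + N) + d * (2*N)" unfolding y by (simp add: algebra_simps)
    moreover have "((2*r + N) + d * (2*N)) div (2*N) = d + (2*r + N) div (2*N)"
      using div_mult_self1[where b="2*N" and a="2*r+N" and c=d] N by simp
    ultimately show ?thesis by metis
  qed
  show ?thesis
  proof (cases "2*r < N")
    case True
    then have "(2*r) div N = 0" "(2*r + N) div (2*N) = 0" using r by (auto intro: div_pos_pos_trivial)
    then show ?thesis unfolding A B d_r_def[symmetric] by simp
  next
    case False
    then have "(2*r) div N = 1" "(2*r + N) div (2*N) = 1" using r N by (auto intro!: div_one_int)
    then show ?thesis unfolding A B d_r_def[symmetric] by simp
  qed
qed

lemma hermite_split:
  fixes a m x :: int
  assumes m: "m > 0" and na: "\<not> 3 dvd a"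
  shows "a*x div (3*m) + a*(x+m) div (3*m) + a*(x+2*m) div (3*m) = a*x div m + a - 1"
proof -
  have e: "a*(x + j*m) div (3*m) = (a*x div m + a*j) div 3" for j
  proof -
    have "a*(x + j*m) div (3*m) = a*(x + j*m) div m div 3"
      by (metis mult.commute zdiv_zmult2_eq zero_le_numeral)
    moreover have "a*(x + j*m) = a*x + (a*j) * m" by (simp add: algebra_simps)
    ultimately show ?thesis using m by simp
  qed
  have "a*(x+m) div (3*m) = (a*x div m + a) div 3" using e[of 1] by simp
  moreover have "a*(x+2*m) div (3*m) = (a*x div m + 2*a) div 3" using e[of 2] by (simp add: mult.commute)
  moreover have "a*x div (3*m) = (a*x div m) div 3" using e[of 0] by simp
  ultimately show ?thesis using herm3[OF na, of "a*x div m"] by simp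
qed

lemma TT_from0: "TT a K = (\<Sum>x\<in>{0..<K}. x * (a * x div K))"
proof (cases "K \<ge> 1")
  case True
  then have "{0..<K} = insert 0 {1..<K}" by auto
  then show ?thesis unfolding TT_def by simp
qed (simp add: TT_def)

lemma sum_shift_int:
  fixes m d :: int and \<phi> :: "int \<Rightarrow> int"
  shows "(\<Sum>y\<in>{d..<d+m}. \<phi> y) = (\<Sum>x\<in>{0..<m}. \<phi> (x + d))"
proof -
  have "(\<lambda>x. x + d) ` {0..<m} = {d..<d+m}" by (simp add: add.commute)
  moreover have "inj_on (\<lambda>x. x + d) {0..<m}" by (simp add: inj_on_def)
  ultimately show ?thesis using sum.reindex[of "\<lambda>x. x + d" "{0..<m}" \<phi>] by (simp add: o_def)
qed

lemma sum_split3: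
  fixes m :: int and \<phi> :: "int \<Rightarrow> int"
  assumes m: "m \<ge> 0"
  shows "(\<Sum>y\<in>{0..<3*m}. \<phi> y) = (\<Sum>x\<in>{0..<m}. \<phi> x + \<phi> (x + m) + \<phi> (x + 2*m))"
proof -
  have U1: "{0..<3*m} = {0..<m} \<union> {m..<3*m}" using m by auto
  have U2: "{m..<3*m} = {m..<m+m} \<union> {2*m..<2*m+m}" using m by auto
  have "(\<Sum>y\<in>{0..<3*m}. \<phi> y) = (\<Sum>y\<in>{0..<m}. \<phi> y) + (\<Sum>y\<in>{m..<3*m}. \<phi> y)"
    unfolding U1 by (rule sum.union_disjoint) auto
  also have "(\<Sum>y\<in>{m..<3*m}. \<phi> y) = (\<Sum>y\<in>{m..<m+m}. \<phi> y) + (\<Sum>y\<in>{2*m..<2*m+m}. \<phi> y)"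
    unfolding U2 by (rule sum.union_disjoint) auto
  also have "(\<Sum>y\<in>{m..<m+m}. \<phi> y) = (\<Sum>x\<in>{0..<m}. \<phi> (x + m))" by (rule sum_shift_int)
  also have "(\<Sum>y\<in>{2*m..<2*m+m}. \<phi> y) = (\<Sum>x\<in>{0..<m}. \<phi> (x + 2*m))" by (rule sum_shift_int)
  finally show ?thesis by (simp add: sum.distrib add.assoc)
qed

lemma TT_3m:
  fixes a m :: int
  assumes m: "m > 0" and na: "\<not> 3 dvd a"
  shows "TT a (3*m) = TT a m + (a - 1) * (\<Sum>x\<in>{0..<m}. x)
     + m * (\<Sum>x\<in>{0..<m}. a*(x+m) div (3*m)) + 2*m * (\<Sum>x\<in>{0..<m}. a*(x+2*m) div (3*m))"
proof -
  have "TT a (3*m) = (\<Sum>x\<in>{0..<m}. x * (a*x div (3*m)) + (x+m) * (a*(x+m) div (3*m))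
        + (x + 2*m) * (a*(x+2*m) div (3*m)))"
    unfolding TT_from0 using m by (subst sum_split3) auto
  also have "\<dots> = (\<Sum>x\<in>{0..<m}. x * (a*x div m) + (a - 1) * x + m * (a*(x+m) div (3*m))
        + 2*m * (a*(x+2*m) div (3*m)))"
  proof (rule sum.cong)
    fix x assume "x \<in> {0..<m}"
    have "x * (a*x div (3*m) + a*(x+m) div (3*m) + a*(x+2*m) div (3*m)) = x * (a*x div m + a - 1)"
      using hermite_split[OF m na, of x] by simp
    then show "x * (a*x div (3*m)) + (x+m) * (a*(x+m) div (3*m)) + (x + 2*m) * (a*(x+2*m) div (3*m)) =
       x * (a*x div m) + (a - 1) * x + m * (a*(x+m) div (3*m)) + 2*m * (a*(x+2*m) div (3*m))"
      by (simp add: algebra_simps)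
  qed simp
  also have "\<dots> = TT a m + (a - 1) * (\<Sum>x\<in>{0..<m}. x)
     + m * (\<Sum>x\<in>{0..<m}. a*(x+m) div (3*m)) + 2*m * (\<Sum>x\<in>{0..<m}. a*(x+2*m) div (3*m))"
    unfolding TT_from0 by (simp add: sum.distrib sum_distrib_left)
  finally show ?thesis .
qed

lemma mid_sum:
  fixes h m u :: int
  assumes m: "m = 2*u+1" and u: "u \<ge> 0"
  shows "(\<Sum>x\<in>{0..<m}. (2*h*(x+m) + 3*m) div (6*m)) = h*u + (2*h+3) div 6"
proof -
  define M where "M x = (2*h*(x+m) + 3*m) div (6*m)" for x
  have mpos: "m > 0" using m u by simp
  have M0: "M 0 = (2*h+3) div 6"
  proof -
    have "2*h*(0+m) + 3*m = (2*h+3)*m" by (simp add: algebra_simps)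
    moreover have "6*m = 6*m" ..
    ultimately have "M 0 = ((2*h+3)*m) div (6*m)" unfolding M_def by simp
    also have "\<dots> = (2*h+3) div 6" using mpos by (simp add: div_mult_mult2)
    finally show ?thesis .
  qed
  have pair: "M x + M (m - x) = h" for x
  proof -
    define z where "z = 2*h*(x+m) + 3*m"
    have "z = 2*(h*(x+m) + 3*u + 1) + 1" unfolding z_def by (simp add: m algebra_simps)
    then have zodd: "odd z" by simp
    have nd: "z mod (6*m) \<noteq> 0"
    proof
      assume "z mod (6*m) = 0"
      then have "6*m dvd z" by (simp add: dvd_eq_mod_eq_0)
      moreover have "2 dvd 6*m" by simp
      ultimately have "2 dvd z" using dvd_trans by blast
      then show False using zodd by simp
    qed
    have "2*h*((m - x)+m) + 3*m = (- z) + (h+1) * (6*m)" unfolding z_def by (simp add: algebra_simps)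
    then have "M (m - x) = ((- z) + (h+1) * (6*m)) div (6*m)" unfolding M_def by simp
    also have "\<dots> = (h+1) + (- z) div (6*m)" using mpos div_mult_self1[where a="-z" and c="h+1" and b="6*m"] by simp
    also have "(- z) div (6*m) = - (z div (6*m)) - 1" using nd mpos by (simp add: zdiv_zminus1_eq_if)
    finally show ?thesis unfolding M_def z_def by simp
  qed
  have "{0..<m} = insert 0 {1..<m}" using mpos by auto
  then have S: "(\<Sum>x\<in>{0..<m}. M x) = M 0 + (\<Sum>x\<in>{1..<m}. M x)" by simp
  have R: "(\<Sum>x\<in>{1..<m}. M x) = (\<Sum>x\<in>{1..<m}. M (m - x))"
    by (rule sum.reindex_bij_witness[where i="\<lambda>x. m - x" and j="\<lambda>x. m - x"]) auto
  have "2 * (\<Sum>x\<in>{1..<m}. M x) = (\<Sum>x\<in>{1..<m}. M x + M (m - x))"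
    using R by (simp add: sum.distrib)
  also have "\<dots> = (m - 1) * h" using pair mpos by simp
  finally have "(\<Sum>x\<in>{1..<m}. M x) = h * u" unfolding m by (simp add: algebra_simps)
  then show ?thesis using S M0 unfolding M_def by simp
qed

lemma parity_main:
  fixes h m u :: int
  assumes m: "m = 2*u+1" and u: "u \<ge> 0" and h3: "\<not> 3 dvd h"
  shows "even (TT h m + TT (2*h) m + TT h (3*m) + TT (2*h) (3*m)
     - ((3*h-2)*((2*u+1)*u) + h*u + (2*h+3) div 6))"
proof -
  have mpos: "m > 0" using m u by simp
  have h3': "\<not> 3 dvd (2*h)"
  proof
    assume "3 dvd 2*h"
    then have "3 dvd 3*h - 2*h" by (metis dvd_diff dvd_triv_left)
    moreover have "3*h - 2*h = h" by simp
    ultimately show False using h3 by metis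
  qed
  define Sx where "Sx = (\<Sum>x\<in>{0..<m}. x)"
  have "{0..<m} = insert 0 {1..<m}" using mpos by auto
  then have "Sx = (\<Sum>x\<in>{1..<m}. x)" unfolding Sx_def by simp
  then have "2 * Sx = m * (m - 1)" using sum_id_int[of m] mpos by simp
  then have Sx: "Sx = (2*u+1)*u" unfolding m by (simp add: algebra_simps)
  define A1 where "A1 = (\<Sum>x\<in>{0..<m}. h*(x+m) div (3*m))"
  define B1 where "B1 = (\<Sum>x\<in>{0..<m}. 2*h*(x+m) div (3*m))"
  define A2 where "A2 = (\<Sum>x\<in>{0..<m}. h*(x+2*m) div (3*m))"
  define B2 where "B2 = (\<Sum>x\<in>{0..<m}. 2*h*(x+2*m) div (3*m))"
  define SM where "SM = (\<Sum>x\<in>{0..<m}. (2*h*(x+m) + 3*m) div (6*m))"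
  have t1: "TT h (3*m) = TT h m + (h - 1) * Sx + m * A1 + 2*m*A2"
    using TT_3m[OF mpos h3] unfolding Sx_def A1_def A2_def by simp
  have t2: "TT (2*h) (3*m) = TT (2*h) m + (2*h - 1) * Sx + m * B1 + 2*m*B2"
    using TT_3m[OF mpos h3'] unfolding Sx_def B1_def B2_def by simp
  have "even (A1 + B1 - SM)"
  proof -
    have "A1 + B1 - SM = (\<Sum>x\<in>{0..<m}. h*(x+m) div (3*m) + 2*h*(x+m) div (3*m)
        - (2*h*(x+m) + 3*m) div (6*m))"
      unfolding A1_def B1_def SM_def by (simp add: sum.distrib sum_subtractf)
    moreover have "even (h*(x+m) div (3*m) + 2*h*(x+m) div (3*m) - (2*h*(x+m) + 3*m) div (6*m))" for x
    proof -
      have "0 < 3*m" using mpos by simp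
      from dbl_parity[OF this, of "h*(x+m)"] show ?thesis by (simp add: mult.assoc)
    qed
    ultimately show ?thesis by (simp add: dvd_sum)
  qed
  then obtain w where w: "A1 + B1 - SM = 2 * w" by (rule evenE)
  have SM: "SM = h*u + (2*h+3) div 6" unfolding SM_def using mid_sum[OF m u] .
  have eqn: "TT h m + TT (2*h) m + TT h (3*m) + TT (2*h) (3*m)
     - ((3*h-2)*((2*u+1)*u) + h*u + (2*h+3) div 6) =
     2 * (TT h m + TT (2*h) m + m*A2 + m*B2 + u*(A1+B1) + w)"
  proof -
    have A1e: "A1 = h*u + (2*h+3) div 6 + 2*w - B1" using w SM by simp
    show ?thesis unfolding t1 t2 Sx A1e by (simp add: m algebra_simps)
  qed
  show ?thesis by (subst eqn) simp
qed



definition recf :: "int \<Rightarrow> int \<Rightarrow> int" where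
  "recf a K = 6*K*(K-1)*(a-1)^2 + 3*K*(K-1)*(a-1) + (a^2-1)*(K-1)*(2*K-1)"

definition Qf :: "int \<Rightarrow> int \<Rightarrow> int \<Rightarrow> int" where
  "Qf a K T = 2*a*(K-1)*(2*K-1) - 12*T - 3*K*(K-1)"

lemma lin2: "(x::int) - y = a * A + b * B \<Longrightarrow> A = 0 \<Longrightarrow> B = 0 \<Longrightarrow> x = y"
  by simp

lemma fin216:
  fixes D m Z Z' :: int
  assumes "D = 108*m*Z" "D = 8*Z'" "odd m"
  shows "216*m dvd D"
proof -
  have "4 * (27*m*Z) = 4 * (2*Z')" using assms(1,2) by simp
  then have "27*m*Z = 2*Z'" by (simp add: algebra_simps)
  then have "even (27*m*Z)" by simp
  then have "even Z" using assms(3) by simp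
  then obtain n where "Z = 2*n" by (rule evenE)
  then have "D = (216*m)*n" using assms(1) by simp
  then show ?thesis by simp
qed

lemma int_core:
  fixes h g m u q c e j T1 T2 T3 T4 U1 U2 U3 U4 :: int
  assumes mdef: "m = 2*u+1"
    and rel: "h*(2*g) = -1 + (3*m)*q"
    and qc: "q - 5*m = 2*c"
    and er: "(2*h+3) div 6 = h + 1 - 2*e"
    and par: "T3 + T4 + T1 + T2 - ((3*h-2)*((2*u+1)*u) + h*u + (2*h+3) div 6) = 2*j"
    and r1: "12*h*T1 + 12*(3*m)*U1 = recf h (3*m)"
    and r2: "12*(2*h)*T2 + 12*(3*m)*U2 = recf (2*h) (3*m)"
    and r3: "12*h*T3 + 12*m*U3 = recf h m"
    and r4: "12*(2*h)*T4 + 12*m*U4 = recf (2*h) m"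
  shows "(216*m) dvd (9*(Qf (2*h) m T4 - Qf h m T3) + 3*(Qf (2*h) (3*m) T2 + Qf h (3*m) T1) - 36*(3*m)
            + 2*(-9*(3*m) + 9*(3*m)^2 + h*(-9 + 5*(3*m)^2) - 2*(3*m)^2*(2*g)))"
    and "(216*m) dvd (9*(Qf h m T3 - 3*Qf (2*h) m T4) + 3*(Qf (2*h) (3*m) T2 + Qf h (3*m) T1) - 36*(3*m)
            + 4*(3*(3*m)^2 + h*(9 + (3*m)^2) - (3*m)^2*(2*g)))"
proof -
  define Rq where "Rq = h*(2*g) + 1 - 3*m*q"
  have Rq0: "Rq = 0" unfolding Rq_def using rel by simp
  define Rc where "Rc = q - 5*m - 2*c"
  have Rc0: "Rc = 0" unfolding Rc_def using qc by simp
  have modd: "odd m" using mdef by simp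
  have d1: "12*T1 = -(2*g)*recf h (3*m) + 36*m*(q*T1 + 2*g*U1)"
    by (rule lin2[where a="-(2*g)" and A="12*h*T1 + 12*(3*m)*U1 - recf h (3*m)" and b="12*T1" and B=Rq])
       (simp add: Rq_def algebra_simps, insert r1, simp, rule Rq0)
  have d2: "12*T2 = -g*recf (2*h) (3*m) + 36*m*(q*T2 + g*U2)"
    by (rule lin2[where a="-g" and A="12*(2*h)*T2 + 12*(3*m)*U2 - recf (2*h) (3*m)" and b="12*T2" and B=Rq])
       (simp add: Rq_def algebra_simps, insert r2, simp, rule Rq0)
  have d3: "12*T3 = -(2*g)*recf h m + 12*m*(3*q*T3 + 2*g*U3)"
    by (rule lin2[where a="-(2*g)" and A="12*h*T3 + 12*m*U3 - recf h m" and b="12*T3" and B=Rq])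
       (simp add: Rq_def algebra_simps, insert r3, simp, rule Rq0)
  have d4: "12*T4 = -g*recf (2*h) m + 12*m*(3*q*T4 + g*U4)"
    by (rule lin2[where a="-g" and A="12*(2*h)*T4 + 12*m*U4 - recf (2*h) m" and b="12*T4" and B=Rq])
       (simp add: Rq_def algebra_simps, insert r4, simp, rule Rq0)
  have par': "(T3 + T4 + T1 + T2 - ((3*h-2)*((2*u+1)*u) + h*u + (h + 1 - 2*e)) - 2*j) = 0" using par unfolding er by simp
  define D1 where "D1 = 9*(Qf (2*h) m T4 - Qf h m T3) + 3*(Qf (2*h) (3*m) T2 + Qf h (3*m) T1) - 36*(3*m) + 2*(-9*(3*m) + 9*(3*m)^2 + h*(-9 + 5*(3*m)^2) - 2*(3*m)^2*(2*g))"
  have s1: "D1 = 9*(Qf (2*h) m 0 - Qf h m 0) + 3*(Qf (2*h) (3*m) 0 + Qf h (3*m) 0) - 36*(3*m) + 2*(-9*(3*m) + 9*(3*m)^2 + h*(-9 + 5*(3*m)^2) - 2*(3*m)^2*(2*g)) - 3*(3*(12*T4) - 3*(12*T3) + 12*T2 + 12*T1)"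
    unfolding D1_def Qf_def by (simp add: algebra_simps)
  have s2: "D1 = 9*(Qf (2*h) m 0 - Qf h m 0) + 3*(Qf (2*h) (3*m) 0 + Qf h (3*m) 0) - 36*(3*m) + 2*(-9*(3*m) + 9*(3*m)^2 + h*(-9 + 5*(3*m)^2) - 2*(3*m)^2*(2*g)) - 3*(3*(-g*recf (2*h) m + 12*m*(3*q*T4 + g*U4)) - 3*(-(2*g)*recf h m + 12*m*(3*q*T3 + 2*g*U3)) + (-g*recf (2*h) (3*m) + 36*m*(q*T2 + g*U2)) + (-(2*g)*recf h (3*m) + 36*m*(q*T1 + 2*g*U1)))"
    using s1 unfolding d1 d2 d3 d4 .
  have s3: "9*(Qf (2*h) m 0 - Qf h m 0) + 3*(Qf (2*h) (3*m) 0 + Qf h (3*m) 0) - 36*(3*m) + 2*(-9*(3*m) + 9*(3*m)^2 + h*(-9 + 5*(3*m)^2) - 2*(3*m)^2*(2*g)) - 3*(3*(-g*recf (2*h) m + 12*m*(3*q*T4 + g*U4)) - 3*(-(2*g)*recf h m + 12*m*(3*q*T3 + 2*g*U3)) + (-g*recf (2*h) (3*m) + 36*m*(q*T2 + g*U2)) + (-(2*g)*recf h (3*m) + 36*m*(q*T1 + 2*g*U1)))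
     = 108*m*((-1 - 2*h + h*c + 3*h*g - 9*h*g*m - 6*h^2*g + 20*h*m^2*q) - ((3*q*T4 + g*U4) - (3*q*T3 + 2*g*U3) + (q*T2 + g*U2) + (q*T1 + 2*g*U1))) + (18*h + 720*h*m^2)*Rq + 54*m*h*Rc"
    unfolding Rq_def Rc_def recf_def Qf_def by (simp add: algebra_simps power2_eq_square)
  have a1: "D1 = 108*m*((-1 - 2*h + h*c + 3*h*g - 9*h*g*m - 6*h^2*g + 20*h*m^2*q) - ((3*q*T4 + g*U4) - (3*q*T3 + 2*g*U3) + (q*T2 + g*U2) + (q*T1 + 2*g*U1)))" using s2 s3 Rq0 Rc0 by simp
  have "D1 - 8*((-18 + 9*e - 18*u + 18*u^2 - 9*g - 36*g*u - 36*g*u^2 + 27*h + 153*h*u + 198*h*u^2) - 9*j - 9*T4 + 18*T3) = -36*(T3 + T4 + T1 + T2 - ((3*h-2)*((2*u+1)*u) + h*u + (h + 1 - 2*e)) - 2*j)"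
    unfolding D1_def Qf_def by (simp add: mdef algebra_simps power2_eq_square)
  then have b1: "D1 = 8*((-18 + 9*e - 18*u + 18*u^2 - 9*g - 36*g*u - 36*g*u^2 + 27*h + 153*h*u + 198*h*u^2) - 9*j - 9*T4 + 18*T3)" using par' by simp
  show "(216*m) dvd (9*(Qf (2*h) m T4 - Qf h m T3) + 3*(Qf (2*h) (3*m) T2 + Qf h (3*m) T1) - 36*(3*m) + 2*(-9*(3*m) + 9*(3*m)^2 + h*(-9 + 5*(3*m)^2) - 2*(3*m)^2*(2*g)))" using fin216[OF a1 b1 modd] unfolding D1_def .
  define D2 where "D2 = 9*(Qf h m T3 - 3*Qf (2*h) m T4) + 3*(Qf (2*h) (3*m) T2 + Qf h (3*m) T1) - 36*(3*m) + 4*(3*(3*m)^2 + h*(9 + (3*m)^2) - (3*m)^2*(2*g))"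
  have s1': "D2 = 9*(Qf h m 0 - 3*Qf (2*h) m 0) + 3*(Qf (2*h) (3*m) 0 + Qf h (3*m) 0) - 36*(3*m) + 4*(3*(3*m)^2 + h*(9 + (3*m)^2) - (3*m)^2*(2*g)) - 3*(3*(12*T3) - 9*(12*T4) + 12*T2 + 12*T1)"
    unfolding D2_def Qf_def by (simp add: algebra_simps)
  have s2': "D2 = 9*(Qf h m 0 - 3*Qf (2*h) m 0) + 3*(Qf (2*h) (3*m) 0 + Qf h (3*m) 0) - 36*(3*m) + 4*(3*(3*m)^2 + h*(9 + (3*m)^2) - (3*m)^2*(2*g)) - 3*(3*(-(2*g)*recf h m + 12*m*(3*q*T3 + 2*g*U3)) - 9*(-g*recf (2*h) m + 12*m*(3*q*T4 + g*U4)) + (-g*recf (2*h) (3*m) + 36*m*(q*T2 + g*U2)) + (-(2*g)*recf h (3*m) + 36*m*(q*T1 + 2*g*U1)))"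
    using s1' unfolding d1 d2 d3 d4 .
  have s3': "9*(Qf h m 0 - 3*Qf (2*h) m 0) + 3*(Qf (2*h) (3*m) 0 + Qf h (3*m) 0) - 36*(3*m) + 4*(3*(3*m)^2 + h*(9 + (3*m)^2) - (3*m)^2*(2*g)) - 3*(3*(-(2*g)*recf h m + 12*m*(3*q*T3 + 2*g*U3)) - 9*(-g*recf (2*h) m + 12*m*(3*q*T4 + g*U4)) + (-g*recf (2*h) (3*m) + 36*m*(q*T2 + g*U2)) + (-(2*g)*recf h (3*m) + 36*m*(q*T1 + 2*g*U1)))
     = 108*m*((-h*q - 1 + h - h*m - 6*h*g*m + 3*h^2*g + 8*h*m^2*q) - ((3*q*T3 + 2*g*U3) - 3*(3*q*T4 + g*U4) + (q*T2 + g*U2) + (q*T1 + 2*g*U1))) + (-36*h + 288*h*m^2)*Rq"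
    unfolding Rq_def recf_def Qf_def by (simp add: algebra_simps power2_eq_square)
  have a2: "D2 = 108*m*((-h*q - 1 + h - h*m - 6*h*g*m + 3*h^2*g + 8*h*m^2*q) - ((3*q*T3 + 2*g*U3) - 3*(3*q*T4 + g*U4) + (q*T2 + g*U2) + (q*T1 + 2*g*U1)))" using s2' s3' Rq0 by simp
  have "D2 - 8*((-18 + 9*e - 18*u + 18*u^2 - 9*g - 36*g*u - 36*g*u^2 + 27*h + 99*h*u + 63*h*u^2) - 9*j - 9*T3 + 45*T4) = -36*(T3 + T4 + T1 + T2 - ((3*h-2)*((2*u+1)*u) + h*u + (h + 1 - 2*e)) - 2*j)"
    unfolding D2_def Qf_def by (simp add: mdef algebra_simps power2_eq_square)
  then have b2: "D2 = 8*((-18 + 9*e - 18*u + 18*u^2 - 9*g - 36*g*u - 36*g*u^2 + 27*h + 99*h*u + 63*h*u^2) - 9*j - 9*T3 + 45*T4)" using par' by simp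
  show "(216*m) dvd (9*(Qf h m T3 - 3*Qf (2*h) m T4) + 3*(Qf (2*h) (3*m) T2 + Qf h (3*m) T1) - 36*(3*m) + 4*(3*(3*m)^2 + h*(9 + (3*m)^2) - (3*m)^2*(2*g)))" using fin216[OF a2 b2 modd] unfolding D2_def .
qed



lemma omega_prod1:
  "omega a K * omega b L * omega c M / omega d N =
   exp (complex_of_real pi * \<i> * complex_of_real (dedekind_sum a K + dedekind_sum b L + dedekind_sum c M - dedekind_sum d N))"
  unfolding omega_def by (simp add: distrib_left right_diff_distrib exp_add exp_diff)

lemma omega_prod2:
  "omega a K * omega b L * omega c M / omega d N ^ 3 =
   exp (complex_of_real pi * \<i> * complex_of_real (dedekind_sum a K + dedekind_sum b L + dedekind_sum c M - 3 * dedekind_sum d N))"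
proof -
  have "omega d N ^ 3 = exp (complex_of_real pi * \<i> * complex_of_real (3 * dedekind_sum d N))"
    unfolding omega_def by (simp add: exp_of_nat_mult[symmetric] algebra_simps)
  then show ?thesis unfolding omega_def by (simp add: distrib_left right_diff_distrib exp_add exp_diff)
qed

lemma main_setup:
  fixes k :: nat and h h' :: int
  assumes g6: "gcd k 6 = 3" and cop: "coprime h (int k)" and cg: "[h * h' = -1] (mod int k)"
    and ev: "even h'" and hpos: "h > 0"
  obtains m :: nat where "k = 3*m" "odd m" "k div 3 = m"
    "(216 * int m) dvd (9*(Qf (2*h) (int m) (TT (2*h) (int m)) - Qf h (int m) (TT h (int m)))
        + 3*(Qf (2*h) (int k) (TT (2*h) (int k)) + Qf h (int k) (TT h (int k))) - 36*int k
        + 2*(-9 * int k + 9 * int k ^ 2 + h * (-9 + 5 * int k ^ 2) - 2 * int k ^ 2 * h'))"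
    "(216 * int m) dvd (9*(Qf h (int m) (TT h (int m)) - 3*Qf (2*h) (int m) (TT (2*h) (int m)))
        + 3*(Qf (2*h) (int k) (TT (2*h) (int k)) + Qf h (int k) (TT h (int k))) - 36*int k
        + 4*(3 * int k ^ 2 + h * (9 + int k ^ 2) - int k ^ 2 * h'))"
proof -
  have "3 dvd k" using g6 by (metis gcd_dvd1)
  then obtain m where km: "k = 3*m" by (auto elim: dvdE)
  have kodd: "odd k"
  proof
    assume "even k"
    then have "2 dvd gcd k 6" by simp
    then show False using g6 by simp
  qed
  then have modd: "odd m" using km by simp
  have kdiv: "k div 3 = m" using km by simp
  obtain u where mu: "int m = 2*u+1" "u \<ge> 0"
  proof -
    obtain u' where "m = 2*u'+1" using modd oddE by blast
    then show ?thesis using that[of "int u'"] by simp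
  qed
  define mi where "mi = int m"
  have ki: "int k = 3*mi" unfolding mi_def km by simp
  obtain g where hg: "h' = 2*g" using ev by (rule evenE)
  obtain q where hq: "h * h' + 1 = int k * q"
  proof -
    have "int k dvd h * h' - (-1)" using cg by (simp add: cong_iff_dvd_diff)
    then show ?thesis using that by (auto elim: dvdE)
  qed
  have rel: "h*(2*g) = -1 + (3*mi)*q" using hq hg ki by simp
  have "int k * q = 2*(h*g) + 1" using hq hg by (simp add: algebra_simps)
  then have "odd (int k * q)" by simp
  then have qodd: "odd q" by simp
  have "even (q - 5*mi)" using qodd mu unfolding mi_def by simp
  then obtain c where qc: "q - 5*mi = 2*c" by (rule evenE)
  have h3: "\<not> 3 dvd h"
  proof
    assume "3 dvd h"
    moreover have "(3::int) dvd int k" unfolding ki by simp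
    ultimately have "is_unit (3::int)" using cop by (meson coprime_common_divisor)
    then show False by simp
  qed
  have "even (h + 1 - (2*h+3) div 6)" using h3 by presburger
  then obtain e where "h + 1 - (2*h+3) div 6 = 2*e" by (rule evenE)
  then have er: "(2*h+3) div 6 = h + 1 - 2*e" by simp
  have "even (TT h mi + TT (2*h) mi + TT h (3*mi) + TT (2*h) (3*mi)
     - ((3*h-2)*((2*u+1)*u) + h*u + (2*h+3) div 6))"
    using parity_main[OF mu(1)[folded mi_def] mu(2) h3] .
  then obtain j where par: "TT h mi + TT (2*h) mi + TT h (3*mi) + TT (2*h) (3*mi)
     - ((3*h-2)*((2*u+1)*u) + h*u + (2*h+3) div 6) = 2*j" by (rule evenE)
  have mpos: "mi > 0" using mu unfolding mi_def by simp
  have cop2: "coprime 2 (int k)" using kodd by simp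
  have copk: "coprime h (3*mi)" "coprime (2*h) (3*mi)" using cop cop2 ki by simp_all
  have copm: "coprime h mi" "coprime (2*h) mi"
    using copk by (metis coprime_mult_right_iff)+
  have r1: "12*h*TT h (3*mi) + 12*(3*mi)*TT (3*mi) h = recf h (3*mi)"
    unfolding recf_def by (rule reciprocity_TT) (use hpos mpos copk in auto)
  have r2: "12*(2*h)*TT (2*h) (3*mi) + 12*(3*mi)*TT (3*mi) (2*h) = recf (2*h) (3*mi)"
    unfolding recf_def by (rule reciprocity_TT) (use hpos mpos copk in auto)
  have r3: "12*h*TT h mi + 12*mi*TT mi h = recf h mi"
    unfolding recf_def by (rule reciprocity_TT) (use hpos mpos copm in auto)
  have r4: "12*(2*h)*TT (2*h) mi + 12*mi*TT mi (2*h) = recf (2*h) mi"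
    unfolding recf_def by (rule reciprocity_TT) (use hpos mpos copm in auto)
  have par': "TT h mi + TT (2*h) mi + TT h (3*mi) + TT (2*h) (3*mi)
     - ((3*h-2)*((2*u+1)*u) + h*u + (2*h+3) div 6) = 2*j" using par .
  note core = int_core[OF mu(1)[folded mi_def] rel qc er _ r1 r2 r3 r4]
  have P: "TT h mi + TT (2*h) mi + TT h (3*mi) + TT (2*h) (3*mi)
     - ((3*h-2)*((2*u+1)*u) + h*u + (2*h+3) div 6) = 2*j" using par .
  from core(1)[of j] core(2)[of j] P
  have A: "(216*mi) dvd (9*(Qf (2*h) mi (TT (2*h) mi) - Qf h mi (TT h mi)) + 3*(Qf (2*h) (3*mi) (TT (2*h) (3*mi)) + Qf h (3*mi) (TT h (3*mi))) - 36*(3*mi)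
            + 2*(-9*(3*mi) + 9*(3*mi)^2 + h*(-9 + 5*(3*mi)^2) - 2*(3*mi)^2*(2*g)))"
    and B: "(216*mi) dvd (9*(Qf h mi (TT h mi) - 3*Qf (2*h) mi (TT (2*h) mi)) + 3*(Qf (2*h) (3*mi) (TT (2*h) (3*mi)) + Qf h (3*mi) (TT h (3*mi))) - 36*(3*mi)
            + 4*(3*(3*mi)^2 + h*(9 + (3*mi)^2) - (3*mi)^2*(2*g)))"
    by (simp_all add: algebra_simps)
  show ?thesis
    by (rule that[OF km modd kdiv]) (use A B in \<open>simp_all add: ki hg mi_def\<close>)
qed

lemma ds_shift: "dedekind_sum (a + int K * j) K = dedekind_sum a K"
  unfolding dedekind_sum_def
proof (rule sum.cong)
  fix r assume r: "r \<in> {1..<K}"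
  then have K: "real K > 0" by simp
  have e: "real_of_int (a + int K * j) * real r / real K = real_of_int a * real r / real K + of_int (j * int r)"
    using K by (simp add: field_simps)
  show "real r / real K * (real_of_int (a + int K * j) * real r / real K -
          real_of_int \<lfloor>real_of_int (a + int K * j) * real r / real K\<rfloor> - 1 / 2) =
        real r / real K * (real_of_int a * real r / real K -
          real_of_int \<lfloor>real_of_int a * real r / real K\<rfloor> - 1 / 2)"
    unfolding e by simp
qed simp

lemma exp_plus_pi: "exp (z + complex_of_real pi * \<i>) = - exp z"
  by (simp add: exp_add)

lemma main_pos:
  fixes k :: nat and h h' :: int
  assumes g6: "gcd k 6 = 3" and cop: "coprime h (int k)" and cg: "[h * h' = -1] (mod int k)"
    and ev: "even h'" and hpos: "h > 0"
  shows "(omega (2*h) (k div 3) * omega (2*h) k * omega h k / omega h (k div 3)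
           = - exp (- (2 * pi * \<i> / (36 * of_nat k)) *
               of_int (-9 * int k + 9 * int k ^ 2 + h * (-9 + 5 * int k ^ 2) - 2 * int k ^ 2 * h')))
       \<and> (omega h (k div 3) * omega (2*h) k * omega h k / omega (2*h) (k div 3) ^ 3
           = - exp (- (2 * pi * \<i> / (18 * of_nat k)) *
               of_int (3 * int k ^ 2 + h * (9 + int k ^ 2) - int k ^ 2 * h')))"
proof -
  obtain m :: nat where km: "k = 3*m" and modd: "odd m" and kdiv: "k div 3 = m"
    and A: "(216 * int m) dvd (9*(Qf (2*h) (int m) (TT (2*h) (int m)) - Qf h (int m) (TT h (int m)))
        + 3*(Qf (2*h) (int k) (TT (2*h) (int k)) + Qf h (int k) (TT h (int k))) - 36*int k
        + 2*(-9 * int k + 9 * int k ^ 2 + h * (-9 + 5 * int k ^ 2) - 2 * int k ^ 2 * h'))"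
    and B: "(216 * int m) dvd (9*(Qf h (int m) (TT h (int m)) - 3*Qf (2*h) (int m) (TT (2*h) (int m)))
        + 3*(Qf (2*h) (int k) (TT (2*h) (int k)) + Qf h (int k) (TT h (int k))) - 36*int k
        + 4*(3 * int k ^ 2 + h * (9 + int k ^ 2) - int k ^ 2 * h'))"
    using main_setup[OF assms] by blast
  have mpos: "m > 0" using modd by (cases m) auto
  have kpos: "k > 0" using km mpos by simp
  define s1 where "s1 = dedekind_sum (2*h) m"
  define s2 where "s2 = dedekind_sum (2*h) k"
  define s3 where "s3 = dedekind_sum h k"
  define s4 where "s4 = dedekind_sum h m"
  have q1: "12 * real m * s1 = of_int (Qf (2*h) (int m) (TT (2*h) (int m)))"
    unfolding s1_def Qf_def using dedekind_TT[OF mpos] by simp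
  have q2: "12 * real k * s2 = of_int (Qf (2*h) (int k) (TT (2*h) (int k)))"
    unfolding s2_def Qf_def using dedekind_TT[OF kpos] by simp
  have q3: "12 * real k * s3 = of_int (Qf h (int k) (TT h (int k)))"
    unfolding s3_def Qf_def using dedekind_TT[OF kpos] by simp
  have q4: "12 * real m * s4 = of_int (Qf h (int m) (TT h (int m)))"
    unfolding s4_def Qf_def using dedekind_TT[OF mpos] by simp
  define Y1 where "Y1 = -9 * int k + 9 * int k ^ 2 + h * (-9 + 5 * int k ^ 2) - 2 * int k ^ 2 * h'"
  define Y2 where "Y2 = 3 * int k ^ 2 + h * (9 + int k ^ 2) - int k ^ 2 * h'"
  obtain n1 where n1: "9*(Qf (2*h) (int m) (TT (2*h) (int m)) - Qf h (int m) (TT h (int m)))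
        + 3*(Qf (2*h) (int k) (TT (2*h) (int k)) + Qf h (int k) (TT h (int k))) - 36*int k
        + 2*Y1 = 216 * int m * n1" using A unfolding Y1_def by (auto elim: dvdE)
  obtain n2 where n2: "9*(Qf h (int m) (TT h (int m)) - 3*Qf (2*h) (int m) (TT (2*h) (int m)))
        + 3*(Qf (2*h) (int k) (TT (2*h) (int k)) + Qf h (int k) (TT h (int k))) - 36*int k
        + 4*Y2 = 216 * int m * n2" using B unfolding Y2_def by (auto elim: dvdE)
  have rk: "real k = 3 * real m" using km by simp
  have R1: "9*(12 * real m * s1 - 12 * real m * s4) + 3*(12 * real k * s2 + 12 * real k * s3) - 36 * real k
        + 2 * of_int Y1 = 216 * real m * of_int n1"
    unfolding q1 q2 q3 q4 using arg_cong[OF n1, of real_of_int] by simp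
  have C1: "s1 + s2 + s3 - s4 = 1 - of_int Y1 / (54 * real m) + 2 * of_int n1"
    using R1 mpos unfolding rk by (simp add: field_simps)
  have R2: "9*(12 * real m * s4 - 3 * (12 * real m * s1)) + 3*(12 * real k * s2 + 12 * real k * s3) - 36 * real k
        + 4 * of_int Y2 = 216 * real m * of_int n2"
    unfolding q1 q2 q3 q4 using arg_cong[OF n2, of real_of_int] by simp
  have C2: "s4 + s2 + s3 - 3 * s1 = 1 - of_int Y2 / (27 * real m) + 2 * of_int n2"
    using R2 mpos unfolding rk by (simp add: field_simps)
  have E1: "complex_of_real pi * \<i> * complex_of_real (s1 + s2 + s3 - s4) =
     (- (2 * pi * \<i> / (36 * of_nat k)) * of_int Y1 + complex_of_real pi * \<i>) + \<i> * (of_int n1 * (of_real pi * 2))"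
    unfolding C1 using mpos by (simp add: km field_simps)
  have E2: "complex_of_real pi * \<i> * complex_of_real (s4 + s2 + s3 - 3 * s1) =
     (- (2 * pi * \<i> / (18 * of_nat k)) * of_int Y2 + complex_of_real pi * \<i>) + \<i> * (of_int n2 * (of_real pi * 2))"
    unfolding C2 using mpos by (simp add: km field_simps)
  show ?thesis
    unfolding kdiv omega_prod1 omega_prod2
    unfolding s1_def[symmetric] s2_def[symmetric] s3_def[symmetric] s4_def[symmetric]
      Y1_def[symmetric] Y2_def[symmetric] E1 E2 exp_plus_2pin exp_plus_pi
    by simp
qed

theorem lemma3p5:
  fixes k :: nat and h h' :: int
  assumes "gcd k 6 = 3"
    and "coprime h (int k)"
    and "[h * h' = -1] (mod int k)"
    and "even h'"
  shows "(omega (2*h) (k div 3) * omega (2*h) k * omega h k / omega h (k div 3)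
           = - exp (- (2 * pi * \<i> / (36 * of_nat k)) *
               of_int (-9 * int k + 9 * int k ^ 2 + h * (-9 + 5 * int k ^ 2) - 2 * int k ^ 2 * h')))
       \<and> (omega h (k div 3) * omega (2*h) k * omega h k / omega (2*h) (k div 3) ^ 3
           = - exp (- (2 * pi * \<i> / (18 * of_nat k)) *
               of_int (3 * int k ^ 2 + h * (9 + int k ^ 2) - int k ^ 2 * h')))"
proof -
  note g6 = assms(1)
  have "3 dvd k" using g6 by (metis gcd_dvd1)
  then obtain m where km: "k = 3*m" by (auto elim: dvdE)
  have kpos: "k > 0" using g6 by (cases k) auto
  have kdiv: "k div 3 = m" using km by simp
  define N where "N = \<bar>h\<bar> + 1"
  define h1 where "h1 = h + int k * (36 * N)"
  have "int k * (36 * N) \<ge> 1 * (36 * N)"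
    using kpos by (intro mult_right_mono) (auto simp: N_def)
  moreover have "36 * N > - h" unfolding N_def by (cases "h \<ge> 0") auto
  ultimately have h1pos: "h1 > 0" unfolding h1_def by linarith
  have "gcd (int k) ((36 * N) * int k + h) = gcd (int k) h" by (rule gcd_add_mult)
  then have cop1: "coprime h1 (int k)" using assms(2) unfolding h1_def
    by (simp add: coprime_iff_gcd_eq_1 gcd.commute algebra_simps)
  have "[h1 * h' = h * h' + int k * (36 * N * h')] (mod int k)" unfolding h1_def by (simp add: algebra_simps)
  moreover have "[h * h' + int k * (36 * N * h') = h * h'] (mod int k)"
    by (simp add: cong_iff_dvd_diff)
  ultimately have cg1: "[h1 * h' = -1] (mod int k)" using assms(3) by (meson cong_trans)
  note M = main_pos[OF g6 cop1 cg1 assms(4) h1pos]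
  have om: "omega (a + int K * j) K = omega a K" for a K j unfolding omega_def ds_shift ..
  have o1: "omega (2*h1) (k div 3) = omega (2*h) (k div 3)"
  proof -
    have "2*h1 = 2*h + int (k div 3) * (216 * N)" unfolding h1_def kdiv km by simp
    then show ?thesis using om by simp
  qed
  have o2: "omega (2*h1) k = omega (2*h) k"
  proof -
    have "2*h1 = 2*h + int k * (72 * N)" unfolding h1_def by simp
    then show ?thesis using om by simp
  qed
  have o3: "omega h1 k = omega h k"
    unfolding h1_def using om by simp
  have o4: "omega h1 (k div 3) = omega h (k div 3)"
  proof -
    have "h1 = h + int (k div 3) * (108 * N)" unfolding h1_def kdiv km by simp
    then show ?thesis using om by simp
  qed
  have y1: "- (2 * pi * \<i> / (36 * of_nat k)) *
               of_int (-9 * int k + 9 * int k ^ 2 + h1 * (-9 + 5 * int k ^ 2) - 2 * int k ^ 2 * h')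
      = - (2 * pi * \<i> / (36 * of_nat k)) *
               of_int (-9 * int k + 9 * int k ^ 2 + h * (-9 + 5 * int k ^ 2) - 2 * int k ^ 2 * h')
        + \<i> * (of_int (- N * (-9 + 5 * int k ^ 2)) * (of_real pi * 2))"
    unfolding h1_def using kpos by (simp add: field_simps)
  have y2: "- (2 * pi * \<i> / (18 * of_nat k)) *
               of_int (3 * int k ^ 2 + h1 * (9 + int k ^ 2) - int k ^ 2 * h')
      = - (2 * pi * \<i> / (18 * of_nat k)) *
               of_int (3 * int k ^ 2 + h * (9 + int k ^ 2) - int k ^ 2 * h')
        + \<i> * (of_int (- 2 * N * (9 + int k ^ 2)) * (of_real pi * 2))"
    unfolding h1_def using kpos by (simp add: field_simps)
  show ?thesis using M unfolding o1 o2 o3 o4 y1 y2 exp_plus_2pin .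
qed


end
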